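(* Let $k\ge0$ be an integer and $a,b,c\in\mathbb{C}$ with $c\notin\{0,-1,-2,\dots\}$, $1+2c-b+k\notin\{0,-1,-2,\dots\}$, and $\mathrm{Re}(2c-a-2b+k)>0$. Then $${}_3F_2\!\left(\left.\begin{array}{c}a,\ b,\ c+1\\ 1+2c-b+k,\ c\end{array}\right|1\right)=\frac{\big[(a-2c)(b-c)+kc\big]\,\Gamma(2c-b+k+1)\,\Gamma(2c-a-2b+k)}{c\,\Gamma(2c-2b+k+1)\,\Gamma(2c-a-b+k+1)},$$ where $1/\Gamma$ is interpreted as the entire function.
   Context: ${}_3F_2(a_1,a_2,a_3;b_1,b_2;1)=\sum_{m\ge0}\frac{(a_1)_m(a_2)_m(a_3)_m}{m!\,(b_1)_m(b_2)_m}$ with $(\alpha)_m=\Gamma(\alpha+m)/\Gamma(\alpha)$, absolutely convergent when $\mathrm{Re}(b_1+b_2-a_1-a_2-a_3)>0$. *)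

theory Defs
  imports "HOL-Analysis.Analysis"
begin

definition hyp3F2_one :: "complex \<Rightarrow> complex \<Rightarrow> complex \<Rightarrow> complex \<Rightarrow> complex \<Rightarrow> complex" where
  "hyp3F2_one a1 a2 a3 b1 b2 =
     (\<Sum>m. pochhammer a1 m * pochhammer a2 m * pochhammer a3 m /
           (fact m * pochhammer b1 m * pochhammer b2 m))"

end

theory Submission
  imports Defs
begin

definition TT :: "complex \<Rightarrow> complex \<Rightarrow> complex \<Rightarrow> nat \<Rightarrow> complex" where
 "TT a b c n = pochhammer a n * pochhammer b n / (fact n * pochhammer c n)"

lemma poch_nz: "c \<notin> \<int>\<^sub>\<le>\<^sub>0 \<Longrightarrow> pochhammer (c::complex) n \<noteq> 0"
  by (auto simp: pochhammer_eq_0_iff)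

lemma poch_asym: "pochhammer (z::complex) (Suc n) = rGamma_series z n * fact n * exp (z * of_real (ln (real n)))"
  unfolding rGamma_series_def by simp

lemma TT_asym:
  assumes c: "c \<notin> \<int>\<^sub>\<le>\<^sub>0"
  shows "of_nat (Suc n) * TT a b c (Suc n) =
     rGamma_series a n * rGamma_series b n / rGamma_series c n * exp ((a+b-c) * of_real (ln (real n)))"
proof -
  define L where "L = (of_real (ln (real n)) :: complex)"
  have e: "exp ((a+b-c) * L) = exp (a*L) * exp (b*L) / exp (c*L)"
    by (simp add: algebra_simps exp_add exp_diff)
  have rc: "rGamma_series c n \<noteq> 0"
    using poch_nz[OF c, of "Suc n"] unfolding poch_asym by auto
  have fn: "(fact n :: complex) \<noteq> 0" by simp
  have s: "(of_nat (Suc n)::complex) \<noteq> 0" by (metis of_nat_eq_0_iff nat.distinct(1))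
  have "of_nat (Suc n) * TT a b c (Suc n) = of_nat (Suc n) * ((rGamma_series a n * fact n * exp (a*L)) * (rGamma_series b n * fact n * exp (b*L))
     / ((of_nat (Suc n) * fact n) * (rGamma_series c n * fact n * exp (c*L))))"
    unfolding TT_def poch_asym L_def[symmetric] fact_Suc by (simp add: mult_ac)
  also have "\<dots> = (rGamma_series a n * fact n * exp (a*L)) * (rGamma_series b n * fact n * exp (b*L))
     / (fact n * (rGamma_series c n * fact n * exp (c*L)))"
    by (simp only: times_divide_eq_right mult_divide_mult_cancel_left[OF s] mult.assoc)
  also have "\<dots> = rGamma_series a n * rGamma_series b n / rGamma_series c n * exp ((a+b-c) * L)"
    unfolding e using rc fn by (simp add: field_simps)
  finally show ?thesis unfolding L_def .
qed

lemma norm_exp_ln: "n > 0 \<Longrightarrow> norm (exp (w * of_real (ln (real n)))) = real n powr Re w"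
  by (simp add: powr_def)

lemma TT_props:
  assumes c: "c \<notin> \<int>\<^sub>\<le>\<^sub>0" and re: "Re (c - a - b) > 0"
  shows "summable (\<lambda>n. norm (TT a b c n))" "(\<lambda>n. of_nat n * TT a b c n) \<longlonglongrightarrow> 0"
proof -
  define R where "R n = rGamma_series a n * rGamma_series b n / rGamma_series c n" for n
  define E where "E n = exp ((a+b-c) * of_real (ln (real n)))" for n
  define s where "s = Re (a+b-c)"
  have s: "s < 0" using re by (simp add: s_def)
  have "R \<longlonglongrightarrow> rGamma a * rGamma b / rGamma c"
    unfolding R_def using c by (intro tendsto_intros) (auto simp: rGamma_eq_zero_iff)
  hence "Bseq R" by (rule convergent_imp_Bseq[OF convergentI])
  then obtain B where B: "B > 0" "\<And>n. norm (R n) \<le> B" by (auto elim: BseqE)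
  have key: "of_nat (Suc n) * TT a b c (Suc n) = R n * E n" for n
    unfolding R_def E_def using TT_asym[OF c] by simp
  have nE: "norm (E n) = real n powr s" if "n > 0" for n
    unfolding E_def s_def using norm_exp_ln[OF that, of "a+b-c"] by (simp only: norm_exp_eq_Re)
  have "(\<lambda>n. real n powr s) \<longlonglongrightarrow> 0"
    by (rule tendsto_neg_powr[OF s filterlim_real_sequentially])
  moreover have "\<forall>\<^sub>F n in sequentially. real n powr s = norm (E n)"
    using eventually_gt_at_top[of "0::nat"] by eventually_elim (simp add: nE)
  ultimately have "(\<lambda>n. norm (E n)) \<longlonglongrightarrow> 0"
    by (rule Lim_transform_eventually)
  hence "E \<longlonglongrightarrow> 0" by (simp add: tendsto_norm_zero_iff)
  from tendsto_mult[OF \<open>R \<longlonglongrightarrow> _\<close> this] have "(\<lambda>n. R n * E n) \<longlonglongrightarrow> 0" by simp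
  hence "(\<lambda>n. of_nat (Suc n) * TT a b c (Suc n)) \<longlonglongrightarrow> 0" unfolding key .
  thus "(\<lambda>n. of_nat n * TT a b c n) \<longlonglongrightarrow> 0" by (rule LIMSEQ_imp_Suc)
  have bnd: "norm (TT a b c (Suc n)) \<le> B * real n powr (s - 1)" if "n \<ge> 1" for n
  proof -
    have n0: "real n > 0" using that by simp
    have "norm (TT a b c (Suc n)) = norm (R n) * real n powr s / real (Suc n)"
    proof -
      have "real (Suc n) * norm (TT a b c (Suc n)) = norm (R n) * norm (E n)"
        using arg_cong[OF key[of n], of norm] by (simp only: norm_mult norm_of_nat)
      thus ?thesis using nE[of n] that by (simp add: field_simps del: of_nat_Suc)
    qed
    also have "\<dots> \<le> B * real n powr s / real n"
      using B n0 by (intro frac_le mult_right_mono) auto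
    also have "\<dots> = B * real n powr (s - 1)"
      using n0 by (simp add: powr_diff)
    finally show ?thesis .
  qed
  have "summable (\<lambda>n. B * real n powr (s - 1))"
    using s by (intro summable_mult) (simp add: summable_real_powr_iff)
  hence "summable (\<lambda>n. norm (TT a b c (Suc n)))"
    by (rule summable_comparison_test'[where N=1]) (use bnd in auto)
  thus "summable (\<lambda>n. norm (TT a b c n))" using summable_Suc_iff[of "\<lambda>n. norm (TT a b c n)"] by simp
qed

lemma nonpos_shift: assumes "(c::complex) \<notin> \<int>\<^sub>\<le>\<^sub>0" shows "c + of_nat j \<notin> \<int>\<^sub>\<le>\<^sub>0"
proof
  assume "c + of_nat j \<in> \<int>\<^sub>\<le>\<^sub>0"
  then obtain m where m: "c + of_nat j = - of_nat m" by (auto elim!: nonpos_Ints_cases')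
  have "c = - of_nat m - of_nat j" using m by (metis add_diff_cancel_right')
  also have "\<dots> = - of_nat (m + j)" by simp
  finally show False using assms minus_of_nat_in_nonpos_Ints[of "m+j"] by blast
qed

lemma TT_shift:
  assumes c: "c \<notin> \<int>\<^sub>\<le>\<^sub>0"
  shows "c * (c-a-b) * TT a b c n - (c-a)*(c-b) * TT a b (c+1) n
     = c * of_nat n * TT a b c n - c * (of_nat (Suc n) * TT a b c (Suc n))"
proof -
  define P where "P = pochhammer a n"
  define Q where "Q = pochhammer b n"
  define C where "C = pochhammer c n"
  define f where "f = (fact n :: complex)"
  have c0: "c \<noteq> 0" using c by auto
  have cn: "c + of_nat n \<noteq> 0" using poch_nz[OF c, of "Suc n"] by (simp add: pochhammer_Suc)
  have C0: "C \<noteq> 0" unfolding C_def using poch_nz[OF c] .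
  have f0: "f \<noteq> 0" unfolding f_def by simp
  have s0: "(of_nat (Suc n) :: complex) \<noteq> 0" by (metis of_nat_eq_0_iff nat.distinct(1))
  have c1: "pochhammer (c+1) n = (c + of_nat n) * C / c"
    using pochhammer_rec[of c n] pochhammer_rec'[of c n] c0 unfolding C_def by (simp add: field_simps)
  have t0: "TT a b c n = P * Q / (f * C)" unfolding TT_def P_def Q_def C_def f_def ..
  have t1: "TT a b (c+1) n = P * Q * c / (f * (c + of_nat n) * C)"
    unfolding TT_def P_def Q_def f_def c1 using c0 cn C0 by (simp add: field_simps)
  have t2: "of_nat (Suc n) * TT a b c (Suc n) = P * (a + of_nat n) * Q * (b + of_nat n) / (f * C * (c + of_nat n))"
  proof -
    have "TT a b c (Suc n) = P * (a + of_nat n) * (Q * (b + of_nat n)) / (of_nat (Suc n) * (f * C * (c + of_nat n)))"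
      unfolding TT_def P_def Q_def C_def f_def by (simp add: pochhammer_Suc fact_Suc mult_ac)
    thus ?thesis using s0 by (simp only: times_divide_eq_right mult_divide_mult_cancel_left) (simp add: mult_ac)
  qed
  define D where "D = P * Q / (f * C * (c + of_nat n))"
  have e0: "TT a b c n = D * (c + of_nat n)" unfolding t0 D_def using cn by simp
  have e1: "TT a b (c+1) n = D * c" unfolding t1 D_def by (simp add: field_simps)
  have e2: "of_nat (Suc n) * TT a b c (Suc n) = D * ((a + of_nat n) * (b + of_nat n))"
    unfolding t2 D_def by (simp add: field_simps)
  show ?thesis unfolding e0 e1 e2 by (simp add: algebra_simps)
qed

definition FF :: "complex \<Rightarrow> complex \<Rightarrow> complex \<Rightarrow> complex" where
  "FF a b c = suminf (TT a b c)"

lemma TT_summable: "c \<notin> \<int>\<^sub>\<le>\<^sub>0 \<Longrightarrow> Re (c - a - b) > 0 \<Longrightarrow> summable (TT a b c)"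
  using TT_props(1) summable_norm_cancel by blast

lemma partial_id:
  assumes c: "c \<notin> \<int>\<^sub>\<le>\<^sub>0"
  shows "c * (c-a-b) * (\<Sum>n<N. TT a b c n) - (c-a)*(c-b) * (\<Sum>n<N. TT a b (c+1) n)
     = - (c * (of_nat N * TT a b c N))"
proof (induction N)
  case 0 show ?case by simp
next
  case (Suc N)
  have "c * (c-a-b) * (\<Sum>n<Suc N. TT a b c n) - (c-a)*(c-b) * (\<Sum>n<Suc N. TT a b (c+1) n)
     = (c * (c-a-b) * (\<Sum>n<N. TT a b c n) - (c-a)*(c-b) * (\<Sum>n<N. TT a b (c+1) n))
       + (c * (c-a-b) * TT a b c N - (c-a)*(c-b) * TT a b (c+1) N)"
    by (simp add: algebra_simps)
  also have "\<dots> = - (c * (of_nat (Suc N) * TT a b c (Suc N)))"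
    unfolding Suc.IH TT_shift[OF c] by (simp add: algebra_simps)
  finally show ?case .
qed

lemma contig:
  assumes c: "c \<notin> \<int>\<^sub>\<le>\<^sub>0" and re: "Re (c - a - b) > 0"
  shows "c * (c-a-b) * FF a b c = (c-a)*(c-b) * FF a b (c+1)"
proof -
  have c1: "c + 1 \<notin> \<int>\<^sub>\<le>\<^sub>0" using nonpos_shift[OF c, of 1] by simp
  have re1: "Re (c + 1 - a - b) > 0" using re by simp
  have "(\<lambda>N. c * (c-a-b) * (\<Sum>n<N. TT a b c n) - (c-a)*(c-b) * (\<Sum>n<N. TT a b (c+1) n))
     \<longlonglongrightarrow> c * (c-a-b) * FF a b c - (c-a)*(c-b) * FF a b (c+1)"
  proof -
    have l1: "(\<lambda>N. \<Sum>n<N. TT a b c n) \<longlonglongrightarrow> FF a b c"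
      unfolding FF_def by (rule summable_LIMSEQ[OF TT_summable[OF c re]])
    have l2: "(\<lambda>N. \<Sum>n<N. TT a b (c+1) n) \<longlonglongrightarrow> FF a b (c+1)"
      unfolding FF_def by (rule summable_LIMSEQ[OF TT_summable[OF c1 re1]])
    show ?thesis by (rule tendsto_diff[OF tendsto_mult[OF tendsto_const l1] tendsto_mult[OF tendsto_const l2]])
  qed
  moreover have "(\<lambda>N. c * (c-a-b) * (\<Sum>n<N. TT a b c n) - (c-a)*(c-b) * (\<Sum>n<N. TT a b (c+1) n))
     \<longlonglongrightarrow> 0"
    unfolding partial_id[OF c] using tendsto_minus[OF tendsto_mult[OF tendsto_const TT_props(2)[OF c re]], of c]
    by simp
  ultimately have "c * (c-a-b) * FF a b c - (c-a)*(c-b) * FF a b (c+1) = 0"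
    by (rule LIMSEQ_unique)
  thus ?thesis by simp
qed

lemma iter:
  assumes c: "c \<notin> \<int>\<^sub>\<le>\<^sub>0" and re: "Re (c - a - b) > 0"
  shows "FF a b c * pochhammer c n * pochhammer (c-a-b) n = pochhammer (c-a) n * pochhammer (c-b) n * FF a b (c + of_nat n)"
proof (induction n)
  case 0 show ?case by simp
next
  case (Suc n)
  have cn: "c + of_nat n \<notin> \<int>\<^sub>\<le>\<^sub>0" by (rule nonpos_shift[OF c])
  have ren: "Re (c + of_nat n - a - b) > 0" using re by simp
  have ct: "(c + of_nat n) * (c + of_nat n - a - b) * FF a b (c + of_nat n) = (c + of_nat n - a) * (c + of_nat n - b) * FF a b (c + of_nat n + 1)"
    by (rule contig[OF cn ren])
  have "FF a b c * pochhammer c (Suc n) * pochhammer (c-a-b) (Suc n) =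
     (FF a b c * pochhammer c n * pochhammer (c-a-b) n) * ((c + of_nat n) * (c - a - b + of_nat n))"
    by (simp add: pochhammer_Suc mult_ac)
  also have "\<dots> = pochhammer (c-a) n * pochhammer (c-b) n * ((c + of_nat n) * (c + of_nat n - a - b) * FF a b (c + of_nat n))"
    unfolding Suc.IH by (simp add: algebra_simps)
  also have "\<dots> = pochhammer (c-a) n * pochhammer (c-b) n * ((c + of_nat n - a) * (c + of_nat n - b) * FF a b (c + of_nat n + 1))"
    unfolding ct ..
  also have "\<dots> = pochhammer (c-a) (Suc n) * pochhammer (c-b) (Suc n) * FF a b (c + of_nat (Suc n))"
    by (simp add: pochhammer_Suc algebra_simps)
  finally show ?case .
qed

lemma norm_le_shift: "Re (u::complex) \<ge> 0 \<Longrightarrow> t \<ge> 0 \<Longrightarrow> norm u \<le> norm (u + of_real t)"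
  unfolding cmod_def by (intro real_sqrt_le_mono) (simp add: power2_eq_square mult_mono)

lemma poch_mono: "Re w \<ge> 0 \<Longrightarrow> norm (pochhammer (w::complex) m) \<le> norm (pochhammer (w + of_nat j) m)"
proof (induction m)
  case 0 show ?case by simp
next
  case (Suc m)
  have "norm (w + of_nat m) \<le> norm ((w + of_nat m) + of_real (real j))"
    using Suc.prems by (intro norm_le_shift) auto
  hence "norm (w + of_nat m) \<le> norm (w + of_nat j + of_nat m)" by (simp add: algebra_simps)
  thus ?case using Suc by (simp add: pochhammer_Suc norm_mult mult_mono)
qed

lemma pos_re_notin: "Re (z::complex) > 0 \<Longrightarrow> z \<notin> \<int>\<^sub>\<le>\<^sub>0"
  by (auto elim!: nonpos_Ints_cases')

lemma TT_tail_bound: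
  assumes w: "Re w > 0"
  shows "norm (TT a b (w + of_nat j) (Suc m)) \<le> norm (TT a b w (Suc m)) * norm w / norm (w + of_nat j)"
proof -
  have w0: "w \<noteq> 0" using pos_re_notin[OF w] by auto
  have wj: "Re (w + of_nat j) > 0" using w by simp
  hence wj0: "w + of_nat j \<noteq> 0" using pos_re_notin[OF wj] by auto
  have p1: "pochhammer (w+1) m \<noteq> 0"
    by (rule poch_nz, rule pos_re_notin) (use w in simp)
  have mono: "norm (pochhammer (w+1) m) \<le> norm (pochhammer (w + of_nat j + 1) m)"
    using poch_mono[of "w+1" m j] w by (simp add: algebra_simps)
  define N where "N = norm (pochhammer a (Suc m) * pochhammer b (Suc m) / fact (Suc m))"
  have "norm (TT a b (w + of_nat j) (Suc m)) = N / (norm (w + of_nat j) * norm (pochhammer (w + of_nat j + 1) m))"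
    unfolding TT_def N_def pochhammer_rec[of "w + of_nat j"] by (simp add: norm_mult norm_divide mult_ac)
  also have "\<dots> \<le> N / (norm (w + of_nat j) * norm (pochhammer (w+1) m))"
    unfolding N_def using mono p1 wj0 by (intro divide_left_mono mult_left_mono mult_pos_pos) auto
  also have "\<dots> = (N / (norm w * norm (pochhammer (w+1) m))) * norm w / norm (w + of_nat j)"
    using w0 by (simp add: field_simps)
  also have "N / (norm w * norm (pochhammer (w+1) m)) = norm (TT a b w (Suc m))"
    unfolding TT_def N_def pochhammer_rec[of w] by (simp add: norm_mult norm_divide mult_ac)
  finally show ?thesis .
qed

lemma lim1:
  assumes c: "c \<notin> \<int>\<^sub>\<le>\<^sub>0" and re: "Re (c - a - b) > 0"
  shows "(\<lambda>n. FF a b (c + of_nat n)) \<longlonglongrightarrow> 1"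
proof -
  obtain N :: nat where N: "- Re c < of_nat N" using reals_Archimedean2 by blast
  define w where "w = c + of_nat N"
  have w: "Re w > 0" using N by (simp add: w_def)
  have rew: "Re (w - a - b) > 0" using re by (simp add: w_def)
  have sumw: "summable (\<lambda>m. norm (TT a b w (Suc m)))"
    using TT_props(1)[OF pos_re_notin[OF w] rew] summable_Suc_iff[of "\<lambda>m. norm (TT a b w m)"] by simp
  define K where "K = norm w * (\<Sum>m. norm (TT a b w (Suc m)))"
  have K0: "K \<ge> 0" unfolding K_def using sumw by (intro mult_nonneg_nonneg suminf_nonneg) auto
  have bound: "norm (FF a b (w + of_nat j) - 1) \<le> K / real j" if j: "j \<ge> 1" for j
  proof -
    define u where "u = w + of_nat j"
    have u: "Re u > 0" using w by (simp add: u_def)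
    have reu: "Re (u - a - b) > 0" using rew by (simp add: u_def)
    have su: "summable (\<lambda>m. norm (TT a b u (Suc m)))"
      using TT_props(1)[OF pos_re_notin[OF u] reu] summable_Suc_iff[of "\<lambda>m. norm (TT a b u m)"] by simp
    have t0: "TT a b u 0 = 1" by (simp add: TT_def)
    have "FF a b u - 1 = (\<Sum>m. TT a b u (Suc m))"
      unfolding FF_def using suminf_split_head[OF TT_summable[OF pos_re_notin[OF u] reu]] t0 by simp
    hence "norm (FF a b u - 1) \<le> (\<Sum>m. norm (TT a b u (Suc m)))"
      using summable_norm[OF su] by simp
    also have "\<dots> \<le> (\<Sum>m. norm (TT a b w (Suc m)) * norm w / norm u)"
      using su sumw TT_tail_bound[OF w] unfolding u_def
      by (intro suminf_le) (auto intro: summable_divide summable_mult2)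
    also have "\<dots> = K / norm u"
      unfolding K_def using sumw by (simp add: suminf_divide suminf_mult2 suminf_mult mult_ac)
    also have "\<dots> \<le> K / real j"
    proof -
      have "real j \<le> Re u" using w by (simp add: u_def)
      also have "\<dots> \<le> norm u" by (rule complex_Re_le_cmod)
      finally have "real j \<le> norm u" .
      moreover have "real j > 0" using j by simp
      ultimately show ?thesis using K0 by (intro divide_left_mono mult_pos_pos) auto
    qed
    finally show ?thesis unfolding u_def .
  qed
  have "(\<lambda>j. FF a b (w + of_nat j) - 1) \<longlonglongrightarrow> 0"
  proof (rule Lim_null_comparison)
    show "\<forall>\<^sub>F j in sequentially. norm (FF a b (w + of_nat j) - 1) \<le> K / real j"
      using eventually_ge_at_top[of "1::nat"] by eventually_elim (rule bound)
    show "(\<lambda>j. K / real j) \<longlonglongrightarrow> 0" by (rule lim_const_over_n)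
  qed
  from tendsto_add[OF this tendsto_const[of 1]]
  have "(\<lambda>j. FF a b (w + of_nat j)) \<longlonglongrightarrow> 1" by simp
  hence "(\<lambda>n. FF a b (c + of_nat (n + N))) \<longlonglongrightarrow> 1"
    unfolding w_def by (simp add: algebra_simps)
  thus ?thesis by (rule LIMSEQ_offset)
qed

lemma gauss:
  assumes c: "c \<notin> \<int>\<^sub>\<le>\<^sub>0" and re: "Re (c - a - b) > 0"
  shows "FF a b c = Gamma c * Gamma (c-a-b) * rGamma (c-a) * rGamma (c-b)"
proof -
  define e where "e = c - a - b"
  have e: "e \<notin> \<int>\<^sub>\<le>\<^sub>0" using pos_re_notin re by (simp add: e_def)
  have eq: "FF a b c * rGamma_series c n * rGamma_series e n =
        rGamma_series (c-a) n * rGamma_series (c-b) n * FF a b (c + of_nat (Suc n))" for n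
  proof -
    define L where "L = (of_real (ln (real n)) :: complex)"
    define X where "X = fact n * fact n * exp (c*L) * exp (e*L)"
    have X0: "X \<noteq> 0" unfolding X_def by simp
    have XY: "X = fact n * fact n * exp ((c-a)*L) * exp ((c-b)*L)"
      unfolding X_def e_def by (simp add: exp_add[symmetric] algebra_simps)
    have "(FF a b c * rGamma_series c n * rGamma_series e n) * X =
          FF a b c * pochhammer c (Suc n) * pochhammer e (Suc n)"
      unfolding X_def poch_asym L_def by (simp add: mult_ac)
    also have "\<dots> = pochhammer (c-a) (Suc n) * pochhammer (c-b) (Suc n) * FF a b (c + of_nat (Suc n))"
      unfolding e_def by (rule iter[OF c re])
    also have "\<dots> = (rGamma_series (c-a) n * rGamma_series (c-b) n * FF a b (c + of_nat (Suc n))) * X"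
      unfolding XY poch_asym L_def by (simp add: mult_ac)
    finally show ?thesis using X0 by simp
  qed
  have l1: "(\<lambda>n. FF a b c * rGamma_series c n * rGamma_series e n) \<longlonglongrightarrow> FF a b c * rGamma c * rGamma e"
    by (intro tendsto_intros)
  have l2: "(\<lambda>n. rGamma_series (c-a) n * rGamma_series (c-b) n * FF a b (c + of_nat (Suc n))) \<longlonglongrightarrow> rGamma (c-a) * rGamma (c-b) * 1"
    by (intro tendsto_mult rGamma_series_LIMSEQ LIMSEQ_Suc[OF lim1[OF c re]])
  have "FF a b c * rGamma c * rGamma e = rGamma (c-a) * rGamma (c-b)"
    using LIMSEQ_unique[OF l1 l2[folded eq]] by simp
  moreover have "rGamma c \<noteq> 0" "rGamma e \<noteq> 0" using c e by (auto simp: rGamma_eq_zero_iff)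
  ultimately show ?thesis unfolding e_def[symmetric] Gamma_def by (simp add: field_simps)
qed

theorem mainTheorem14:
  fixes a b c :: complex and k :: nat
  assumes "c \<notin> \<int>\<^sub>\<le>\<^sub>0"
    and "1 + 2*c - b + of_nat k \<notin> \<int>\<^sub>\<le>\<^sub>0"
    and "Re (2*c - a - 2*b + of_nat k) > 0"
  shows "hyp3F2_one a b (c + 1) (1 + 2*c - b + of_nat k) c =
    ((a - 2*c) * (b - c) + of_nat k * c) * Gamma (2*c - b + of_nat k + 1)
      * Gamma (2*c - a - 2*b + of_nat k)
      * rGamma (2*c - 2*b + of_nat k + 1) * rGamma (2*c - a - b + of_nat k + 1) / c"
proof -
  note c = assms(1)
  define d where "d = 1 + 2*c - b + of_nat k"
  define e where "e = 2*c - a - 2*b + of_nat k"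
  have d: "d \<notin> \<int>\<^sub>\<le>\<^sub>0" using assms(2) by (simp add: d_def)
  have d1: "d + 1 \<notin> \<int>\<^sub>\<le>\<^sub>0" using nonpos_shift[OF d, of 1] by simp
  have ree: "Re e > 0" using assms(3) by (simp add: e_def)
  have e: "e \<notin> \<int>\<^sub>\<le>\<^sub>0" by (rule pos_re_notin[OF ree])
  have dab: "d - a - b = e + 1" by (simp add: d_def e_def algebra_simps)
  have re1: "Re (d - a - b) > 0" unfolding dab using ree by simp
  have dab2: "d + 1 - (a + 1) - (b + 1) = e" by (simp add: d_def e_def algebra_simps)
  have re2: "Re (d + 1 - (a + 1) - (b + 1)) > 0" unfolding dab2 using ree by simp
  have c0: "c \<noteq> 0" using c by auto
  have d0: "d \<noteq> 0" using d by auto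
  define g where "g m = of_nat m * TT a b d m" for m
  have gS: "g (Suc j) = a * b / d * TT (a+1) (b+1) (d+1) j" for j
  proof -
    have pd: "pochhammer (d+1) j \<noteq> 0" by (rule poch_nz[OF d1])
    have s0: "(of_nat (Suc j) :: complex) \<noteq> 0" by (metis of_nat_eq_0_iff nat.distinct(1))
    have "g (Suc j) = of_nat (Suc j) * ((a * pochhammer (a+1) j * (b * pochhammer (b+1) j)) / (of_nat (Suc j) * (fact j * (d * pochhammer (d+1) j))))"
      unfolding g_def TT_def pochhammer_rec fact_Suc by (simp add: mult_ac)
    also have "\<dots> = (a * pochhammer (a+1) j * (b * pochhammer (b+1) j)) / (fact j * (d * pochhammer (d+1) j))"
      by (simp only: times_divide_eq_right mult_divide_mult_cancel_left[OF s0])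
    also have "\<dots> = a * b / d * TT (a+1) (b+1) (d+1) j"
      unfolding TT_def using pd d0 by (simp add: field_simps)
    finally show ?thesis .
  qed
  have sg1: "summable (\<lambda>j. g (Suc j))" unfolding gS
    by (intro summable_mult TT_summable d1 re2)
  hence sg: "summable g" by (simp add: summable_Suc_iff)
  have g0: "g 0 = 0" by (simp add: g_def)
  have sumg: "suminf g = a * b / d * FF (a+1) (b+1) (d+1)"
    using suminf_split_head[OF sg] g0 unfolding gS FF_def
    using suminf_mult[OF TT_summable[OF d1 re2], of "a * b / d"] by simp
  have termeq: "pochhammer a m * pochhammer b m * pochhammer (c + 1) m /
           (fact m * pochhammer d m * pochhammer c m) = TT a b d m + g m / c" for m
  proof -
    have pc: "pochhammer c m \<noteq> 0" by (rule poch_nz[OF c])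
    have c1: "pochhammer (c+1) m = (c + of_nat m) * pochhammer c m / c"
      using pochhammer_rec[of c m] pochhammer_rec'[of c m] c0 by (simp add: field_simps)
    have pdm: "pochhammer d m \<noteq> 0" by (rule poch_nz[OF d])
    show ?thesis unfolding c1 g_def TT_def using pc c0 pdm
      by (simp add: field_simps)
  qed
  have "hyp3F2_one a b (c + 1) (1 + 2*c - b + of_nat k) c = (\<Sum>m. TT a b d m + g m / c)"
    unfolding hyp3F2_one_def d_def[symmetric] termeq ..
  also have "\<dots> = FF a b d + suminf g / c"
    unfolding FF_def using TT_summable[OF d re1] sg
    by (subst suminf_add[symmetric]) (auto intro: summable_divide simp: suminf_divide)
  also have "\<dots> = Gamma d * Gamma (e+1) * rGamma (d-a) * rGamma (d-b)
      + a * b / d * (Gamma (d+1) * Gamma e * rGamma (d-a) * rGamma (d-b)) / c"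
    unfolding sumg gauss[OF d re1] gauss[OF d1 re2] dab dab2
    by (simp add: algebra_simps)
  also have "\<dots> = (c * e + a * b) * Gamma d * Gamma e * rGamma (d-a) * rGamma (d-b) / c"
    using Gamma_plus1[OF e] Gamma_plus1[OF d] c0 d0 by (simp add: field_simps)
  also have "\<dots> = ((a - 2*c) * (b - c) + of_nat k * c) * Gamma (2*c - b + of_nat k + 1)
      * Gamma (2*c - a - 2*b + of_nat k)
      * rGamma (2*c - 2*b + of_nat k + 1) * rGamma (2*c - a - b + of_nat k + 1) / c"
  proof -
    have h1: "c * e + a * b = (a - 2*c) * (b - c) + of_nat k * c" by (simp add: e_def algebra_simps)
    have h2: "d = 2*c - b + of_nat k + 1" and h3: "d - a = 2*c - a - b + of_nat k + 1"
      and h4: "d - b = 2*c - 2*b + of_nat k + 1"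
      by (simp_all add: d_def algebra_simps)
    show ?thesis by (subst h3, subst h4, subst h2, subst h1) (simp only: e_def mult_ac)
  qed
  finally show ?thesis .
qed

end
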